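(* Let $\mathcal{X} \subseteq \mathbb{R}^m$ be countable with ground metric $d$, and let $\widehat\nu = \sum_{j=1}^N \widehat\nu_j \delta_{\widehat x_j}$ be a probability mass function supported on $N$ distinct points $\widehat x_1,\dots,\widehat x_N \in \mathcal{X}$ with $\widehat\nu_j > 0$ and $\sum_j \widehat\nu_j = 1$. For $\varepsilon \ge 0$ let $\mathbb{B}_{\mathbb{W}}(\widehat\nu,\varepsilon) = \{\nu \in \mathcal{M}(\mathcal{X}) : \mathbb{W}(\nu,\widehat\nu) \le \varepsilon\}$. Then for any $\varepsilon \ge 0$ and $x \in \mathcal{X}$, $$\sup_{\nu \in \mathbb{B}_{\mathbb{W}}(\widehat\nu,\varepsilon)} \nu(x) = \max\Big\{ \sum_{j=1}^N T_j : T \in \mathbb{R}^N_+,\ \sum_{j=1}^N d(x,\widehat x_j)\, T_j \le \varepsilon,\ T_j \le \widehat\nu_j \ \forall j \in [N] \Big\}.$$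
   Context: $\mathcal{M}(\mathcal{X})$ is the set of probability mass functions supported on $\mathcal{X}$; $[N] = \{1,\dots,N\}$. The type-1 Wasserstein distance is $\mathbb{W}(\nu_1,\nu_2) = \inf_{\lambda \in \Lambda(\nu_1,\nu_2)} \mathbb{E}_\lambda[d(x_1,x_2)]$, where $\Lambda(\nu_1,\nu_2)$ is the set of couplings on $\mathcal{X}\times\mathcal{X}$ with marginals $\nu_1,\nu_2$. *)

theory Defs
  imports "HOL-Analysis.Analysis" "HOL-Probability.Probability"
begin

definition couplings :: "'a pmf \<Rightarrow> 'a pmf \<Rightarrow> ('a \<times> 'a) pmf set" where
  "couplings \<nu>1 \<nu>2 = {c. map_pmf fst c = \<nu>1 \<and> map_pmf snd c = \<nu>2}"

text \<open>Type-1 Wasserstein distance w.r.t. ground metric d (valued in ennreal,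
  since the expected cost may be infinite).\<close>
definition wasserstein :: "('a \<Rightarrow> 'a \<Rightarrow> real) \<Rightarrow> 'a pmf \<Rightarrow> 'a pmf \<Rightarrow> ennreal" where
  "wasserstein d \<nu>1 \<nu>2 =
     (INF c\<in>couplings \<nu>1 \<nu>2. \<integral>\<^sup>+ p. ennreal (d (fst p) (snd p)) \<partial>(measure_pmf c))"

definition pmfs_on :: "'a set \<Rightarrow> 'a pmf set" where
  "pmfs_on X = {\<nu>. set_pmf \<nu> \<subseteq> X}"

definition wball :: "'a set \<Rightarrow> ('a \<Rightarrow> 'a \<Rightarrow> real) \<Rightarrow> 'a pmf \<Rightarrow> real \<Rightarrow> 'a pmf set" where
  "wball X d \<nu>h \<epsilon> = {\<nu> \<in> pmfs_on X. wasserstein d \<nu> \<nu>h \<le> ennreal \<epsilon>}"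

definition metric_on :: "'a set \<Rightarrow> ('a \<Rightarrow> 'a \<Rightarrow> real) \<Rightarrow> bool" where
  "metric_on X d \<longleftrightarrow>
     (\<forall>x\<in>X. \<forall>y\<in>X. 0 \<le> d x y \<and> (d x y = 0 \<longleftrightarrow> x = y) \<and> d x y = d y x) \<and>
     (\<forall>x\<in>X. \<forall>y\<in>X. \<forall>z\<in>X. d x z \<le> d x y + d y z)"

definition lp_feasible :: "('a \<Rightarrow> 'a \<Rightarrow> real) \<Rightarrow> nat \<Rightarrow> (nat \<Rightarrow> 'a) \<Rightarrow> (nat \<Rightarrow> real)
    \<Rightarrow> real \<Rightarrow> 'a \<Rightarrow> (nat \<Rightarrow> real) set" where
  "lp_feasible d N xh w \<epsilon> x =
     {T. (\<forall>j\<in>{1..N}. 0 \<le> T j \<and> T j \<le> w j) \<and> (\<Sum>j=1..N. d x (xh j) * T j) \<le> \<epsilon>}"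

end

theory Submission imports Defs begin

lemma pmf_hat:
  fixes N :: nat
  assumes inj: "inj_on xh {1..N}" and p: "\<forall>y. pmf \<nu>h y = (\<Sum>j=1..N. if xh j = y then w j else 0)"
    and k: "k \<in> {1..N}"
  shows "pmf \<nu>h (xh k) = w k"
proof -
  have "pmf \<nu>h (xh k) = (\<Sum>j\<in>{1..N}. if j = k then w j else 0)"
    unfolding p[rule_format] using inj k by (intro sum.cong) (auto dest: inj_onD)
  also have "\<dots> = w k" using k by (subst sum.delta[OF finite_atLeastAtMost]) simp
  finally show ?thesis .
qed

lemma set_hat:
  fixes N :: nat
  assumes inj: "inj_on xh {1..N}" and p: "\<forall>y. pmf \<nu>h y = (\<Sum>j=1..N. if xh j = y then w j else 0)"
    and w: "\<forall>j\<in>{1..N}. w j > 0"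
  shows "set_pmf \<nu>h = xh ` {1..N}"
proof (intro set_eqI iffI)
  fix y assume "y \<in> set_pmf \<nu>h"
  hence "pmf \<nu>h y \<noteq> 0" by (simp add: set_pmf_iff)
  have "\<exists>j\<in>{1..N}. xh j = y"
  proof (rule ccontr)
    assume "\<not> (\<exists>j\<in>{1..N}. xh j = y)"
    hence "pmf \<nu>h y = 0" unfolding p[rule_format] by (intro sum.neutral) auto
    thus False using \<open>pmf \<nu>h y \<noteq> 0\<close> by simp
  qed
  then show "y \<in> xh ` {1..N}" by blast
next
  fix y assume "y \<in> xh ` {1..N}"
  then obtain k where "k \<in> {1..N}" "y = xh k" by auto
  then have "pmf \<nu>h y = w k" "w k > 0" using pmf_hat[OF inj p] w by auto
  then show "y \<in> set_pmf \<nu>h" by (simp add: set_pmf_iff)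
qed

lemma int_hat:
  fixes f :: "'a \<Rightarrow> real" and N :: nat
  assumes inj: "inj_on xh {1..N}" and p: "\<forall>y. pmf \<nu>h y = (\<Sum>j=1..N. if xh j = y then w j else 0)"
    and w: "\<forall>j\<in>{1..N}. w j > 0"
  shows "(\<integral>y. f y \<partial>measure_pmf \<nu>h) = (\<Sum>k=1..N. f (xh k) * w k)"
proof -
  have "(\<integral>y. f y \<partial>measure_pmf \<nu>h) = (\<Sum>a\<in>xh ` {1..N}. f a * pmf \<nu>h a)"
    using set_hat[OF inj p w] by (intro integral_measure_pmf_real) (auto intro: finite_imageI)
  also have "\<dots> = (\<Sum>k=1..N. f (xh k) * w k)"
    by (subst sum.reindex[OF inj]) (auto simp: pmf_hat[OF inj p] intro!: sum.cong)
  finally show ?thesis .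
qed

lemma nn_int_hat:
  fixes f :: "'a \<Rightarrow> ennreal" and N :: nat
  assumes inj: "inj_on xh {1..N}" and p: "\<forall>y. pmf \<nu>h y = (\<Sum>j=1..N. if xh j = y then w j else 0)"
    and w: "\<forall>j\<in>{1..N}. w j > 0"
  shows "(\<integral>\<^sup>+y. f y \<partial>measure_pmf \<nu>h) = (\<Sum>k=1..N. f (xh k) * ennreal (w k))"
proof -
  have "(\<integral>\<^sup>+y. f y \<partial>measure_pmf \<nu>h) = (\<Sum>a\<in>xh ` {1..N}. f a * pmf \<nu>h a)"
    using set_hat[OF inj p w] by (subst nn_integral_measure_pmf_finite) (auto intro: finite_imageI)
  also have "\<dots> = (\<Sum>k=1..N. f (xh k) * w k)"
    by (subst sum.reindex[OF inj]) (auto simp: pmf_hat[OF inj p] intro!: sum.cong)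
  finally show ?thesis .
qed

lemma sum_hat:
  fixes N :: nat and g :: "nat \<Rightarrow> 'b::comm_monoid_add"
  assumes inj: "inj_on xh {1..N}" and k: "k \<in> {1..N}"
  shows "(\<Sum>j=1..N. if xh j = xh k then g j else 0) = g k"
proof -
  have "(\<Sum>j=1..N. if xh j = xh k then g j else 0) = (\<Sum>j\<in>{1..N}. if j = k then g j else 0)"
    using inj k by (intro sum.cong) (auto dest: inj_onD)
  also have "\<dots> = g k" using k by (subst sum.delta[OF finite_atLeastAtMost]) simp
  finally show ?thesis .
qed

lemma achieve:
  fixes X :: "'a set" and d :: "'a \<Rightarrow> 'a \<Rightarrow> real" and N :: nat
  assumes met: "metric_on X d"
    and inj: "inj_on xh {1..N}"
    and sub: "xh ` {1..N} \<subseteq> X"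
    and w: "\<forall>j\<in>{1..N}. w j > 0"
    and p: "\<forall>y. pmf \<nu>h y = (\<Sum>j=1..N. if xh j = y then w j else 0)"
    and x: "x \<in> X"
    and T: "T \<in> lp_feasible d N xh w \<epsilon> x"
  shows "\<exists>\<nu>\<in>wball X d \<nu>h \<epsilon>. (\<Sum>j=1..N. T j) \<le> pmf \<nu> x"
proof -
  define r where "r y = (\<Sum>j=1..N. if xh j = y then T j / w j else 0)" for y
  have Tk: "0 \<le> T k" "T k \<le> w k" if "k \<in> {1..N}" for k using T that unfolding lp_feasible_def by auto
  have Tc: "(\<Sum>j=1..N. d x (xh j) * T j) \<le> \<epsilon>" using T unfolding lp_feasible_def by auto
  have rk: "r (xh k) = T k / w k" if "k \<in> {1..N}" for k
    unfolding r_def by (rule sum_hat[OF inj that])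
  have r0: "0 \<le> r (xh k)" and r1: "r (xh k) \<le> 1" if "k \<in> {1..N}" for k
    using rk[OF that] Tk[OF that] w that by auto
  have rw: "r (xh k) * w k = T k" if "k \<in> {1..N}" for k
  proof -
    have "w k > 0" using w that by auto
    thus ?thesis using rk[OF that] by simp
  qed
  have dpos: "0 \<le> d a b" "d a a = 0" if "a \<in> X" "b \<in> X" for a b
    using met that unfolding metric_on_def by auto
  define c where "c = bind_pmf \<nu>h (\<lambda>y. map_pmf (\<lambda>b. (if b then x else y, y)) (bernoulli_pmf (r y)))"
  define \<nu> where "\<nu> = map_pmf fst c"
  have csnd: "map_pmf snd c = \<nu>h"
    unfolding c_def map_bind_pmf by (simp add: map_pmf_comp bind_return_pmf')
  have cc: "c \<in> couplings \<nu> \<nu>h" by (simp add: couplings_def \<nu>_def csnd)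
  have setX: "set_pmf \<nu> \<subseteq> X"
    using set_hat[OF inj p w] sub x unfolding \<nu>_def c_def by auto
  have "(\<integral>\<^sup>+ q. ennreal (d (fst q) (snd q)) \<partial>measure_pmf c)
      = (\<integral>\<^sup>+ y. (\<integral>\<^sup>+ b. ennreal (d (if b then x else y) y) \<partial>measure_pmf (bernoulli_pmf (r y))) \<partial>measure_pmf \<nu>h)"
    unfolding c_def by simp
  also have "\<dots> = (\<Sum>k=1..N. (\<integral>\<^sup>+ b. ennreal (d (if b then x else xh k) (xh k)) \<partial>measure_pmf (bernoulli_pmf (r (xh k)))) * ennreal (w k))"
    by (rule nn_int_hat[OF inj p w])
  also have "\<dots> = (\<Sum>k=1..N. ennreal (d x (xh k) * T k))"
  proof (rule sum.cong[OF refl])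
    fix k assume k: "k \<in> {1..N}"
    have xk: "xh k \<in> X" using sub k by auto
    have "(\<integral>\<^sup>+ b. ennreal (d (if b then x else xh k) (xh k)) \<partial>measure_pmf (bernoulli_pmf (r (xh k))))
        = ennreal (d x (xh k)) * ennreal (r (xh k))"
      using r0[OF k] r1[OF k] dpos[OF xk xk] by simp
    also have "\<dots> * ennreal (w k) = ennreal (d x (xh k) * T k)"
      using dpos[OF x xk] r0[OF k] w k rw[OF k]
      by (simp add: ennreal_mult'[symmetric] mult.assoc del: ennreal_mult')
    finally show "(\<integral>\<^sup>+ b. ennreal (d (if b then x else xh k) (xh k)) \<partial>measure_pmf (bernoulli_pmf (r (xh k)))) * ennreal (w k) = ennreal (d x (xh k) * T k)" .
  qed
  also have "\<dots> = ennreal (\<Sum>k=1..N. d x (xh k) * T k)"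
  proof (rule sum_ennreal)
    fix k assume k: "k \<in> {1..N}"
    have "xh k \<in> X" using sub k by auto
    thus "0 \<le> d x (xh k) * T k" using dpos(1)[OF x] Tk(1)[OF k] by simp
  qed
  also have "\<dots> \<le> ennreal \<epsilon>" using Tc by (rule ennreal_leI)
  finally have cost: "(\<integral>\<^sup>+ q. ennreal (d (fst q) (snd q)) \<partial>measure_pmf c) \<le> ennreal \<epsilon>" .
  have "wasserstein d \<nu> \<nu>h \<le> ennreal \<epsilon>"
    unfolding wasserstein_def using cc cost by (meson INF_lower order_trans)
  hence inball: "\<nu> \<in> wball X d \<nu>h \<epsilon>" using setX unfolding wball_def pmfs_on_def by auto
  have \<nu>eq: "\<nu> = bind_pmf \<nu>h (\<lambda>y. map_pmf (\<lambda>b. if b then x else y) (bernoulli_pmf (r y)))"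
    unfolding \<nu>_def c_def map_bind_pmf by (simp add: map_pmf_comp)
  have "pmf \<nu> x = (\<Sum>k=1..N. pmf (map_pmf (\<lambda>b. if b then x else xh k) (bernoulli_pmf (r (xh k)))) x * w k)"
    unfolding \<nu>eq pmf_bind by (rule int_hat[OF inj p w])
  also have "\<dots> \<ge> (\<Sum>k=1..N. T k)"
  proof (rule sum_mono)
    fix k assume k: "k \<in> {1..N}"
    have "r (xh k) = measure_pmf.prob (bernoulli_pmf (r (xh k))) {True}"
      using r0[OF k] r1[OF k] by (simp add: measure_pmf_single)
    also have "\<dots> \<le> measure_pmf.prob (bernoulli_pmf (r (xh k))) ((\<lambda>b. if b then x else xh k) -` {x})"
      by (rule measure_pmf.finite_measure_mono) auto
    also have "\<dots> = pmf (map_pmf (\<lambda>b. if b then x else xh k) (bernoulli_pmf (r (xh k)))) x"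
      by (simp add: pmf_map)
    finally have "r (xh k) * w k \<le> pmf (map_pmf (\<lambda>b. if b then x else xh k) (bernoulli_pmf (r (xh k)))) x * w k"
      using w k by (intro mult_right_mono) (auto simp del: atLeastAtMost_iff intro: less_imp_le)
    thus "T k \<le> pmf (map_pmf (\<lambda>b. if b then x else xh k) (bernoulli_pmf (r (xh k)))) x * w k"
      using rw[OF k] by simp
  qed
  finally show ?thesis using inball by blast
qed

lemma upper_delta:
  fixes X :: "'a set" and d :: "'a \<Rightarrow> 'a \<Rightarrow> real" and N :: nat
  assumes met: "metric_on X d"
    and inj: "inj_on xh {1..N}"
    and sub: "xh ` {1..N} \<subseteq> X"
    and w: "\<forall>j\<in>{1..N}. w j > 0"
    and p: "\<forall>y. pmf \<nu>h y = (\<Sum>j=1..N. if xh j = y then w j else 0)"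
    and x: "x \<in> X" and eps: "\<epsilon> \<ge> 0"
    and nu: "\<nu> \<in> wball X d \<nu>h \<epsilon>"
    and opt: "\<forall>T'\<in>lp_feasible d N xh w \<epsilon> x. (\<Sum>j=1..N. T' j) \<le> V"
    and del: "\<delta> > 0"
  shows "pmf \<nu> x \<le> V + \<delta> * (\<Sum>j=1..N. if xh j = x then 0 else 1 / d x (xh j))"
proof -
  have dpos: "0 \<le> d a b" "d a b = 0 \<longleftrightarrow> a = b" if "a \<in> X" "b \<in> X" for a b
    using met that unfolding metric_on_def by auto
  have xk: "xh k \<in> X" if "k \<in> {1..N}" for k using sub that by auto
  have "wasserstein d \<nu> \<nu>h \<le> ennreal \<epsilon>" using nu unfolding wball_def by simp
  moreover have "ennreal \<epsilon> < ennreal (\<epsilon> + \<delta>)" using eps del by (simp add: ennreal_less_iff)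
  ultimately have "wasserstein d \<nu> \<nu>h < ennreal (\<epsilon> + \<delta>)" by (rule le_less_trans)
  then obtain c where cc: "c \<in> couplings \<nu> \<nu>h"
    and cost: "(\<integral>\<^sup>+ q. ennreal (d (fst q) (snd q)) \<partial>measure_pmf c) < ennreal (\<epsilon> + \<delta>)"
    unfolding wasserstein_def INF_less_iff by blast
  have cfst: "map_pmf fst c = \<nu>" and csnd: "map_pmf snd c = \<nu>h" using cc unfolding couplings_def by simp_all
  define T where "T j = pmf c (x, xh j)" for j
  define P where "P = (\<lambda>j. (x, xh j)) ` {1..N}"
  have injP: "inj_on (\<lambda>j. (x, xh j)) {1..N}"
  proof (rule inj_onI)
    fix a b assume ab: "a \<in> {1..N}" "b \<in> {1..N}" and e: "(x, xh a) = (x, xh b)"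
    from e have "xh a = xh b" by simp
    from inj_onD[OF inj this ab] show "a = b" .
  qed
  have finP: "finite P" unfolding P_def by auto
  have T0: "0 \<le> T j" for j unfolding T_def by simp
  have Tw: "T k \<le> w k" if k: "k \<in> {1..N}" for k
  proof -
    have "T k = measure_pmf.prob c {(x, xh k)}" unfolding T_def by (simp add: measure_pmf_single)
    also have "\<dots> \<le> measure_pmf.prob c (snd -` {xh k})"
      by (rule measure_pmf.finite_measure_mono) auto
    also have "\<dots> = pmf (map_pmf snd c) (xh k)" by (simp add: pmf_map)
    also have "\<dots> = w k" using csnd pmf_hat[OF inj p k] by simp
    finally show ?thesis .
  qed
  have sumP: "(\<Sum>q\<in>P. f q) = (\<Sum>j=1..N. f (x, xh j))" for f :: "'a \<times> 'a \<Rightarrow> 'b::comm_monoid_add"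
    unfolding P_def by (subst sum.reindex[OF injP]) simp
  have nuT: "pmf \<nu> x \<le> (\<Sum>j=1..N. T j)"
  proof -
    have "pmf \<nu> x = measure_pmf.prob c (fst -` {x})" using cfst by (auto simp: pmf_map)
    also have "\<dots> = measure_pmf.prob c (fst -` {x} \<inter> set_pmf c)" by (simp add: measure_Int_set_pmf)
    also have "\<dots> \<le> measure_pmf.prob c P"
    proof (rule measure_pmf.finite_measure_mono)
      show "fst -` {x} \<inter> set_pmf c \<subseteq> P"
      proof
        fix q assume q: "q \<in> fst -` {x} \<inter> set_pmf c"
        hence "snd q \<in> set_pmf (map_pmf snd c)" by auto
        hence "snd q \<in> xh ` {1..N}" using csnd set_hat[OF inj p w] by simp
        thus "q \<in> P" using q unfolding P_def by (cases q) auto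
      qed
    qed auto
    also have "\<dots> = (\<Sum>j=1..N. T j)" using finP
      by (simp add: measure_measure_pmf_finite sumP T_def)
    finally show ?thesis .
  qed
  define S where "S = (\<Sum>j=1..N. d x (xh j) * T j)"
  have terms0: "0 \<le> d x (xh j) * T j" if "j \<in> {1..N}" for j using dpos(1)[OF x xk[OF that]] T0 by simp
  have S0: "0 \<le> S" unfolding S_def using terms0 by (intro sum_nonneg) auto
  have "ennreal S = (\<Sum>j=1..N. ennreal (d x (xh j) * T j))"
    unfolding S_def using terms0 by (intro sum_ennreal[symmetric]) auto
  also have "\<dots> = (\<Sum>q\<in>P. ennreal (d (fst q) (snd q)) * emeasure (measure_pmf c) {q})"
    unfolding sumP T_def by (intro sum.cong refl) (simp add: emeasure_pmf_single ennreal_mult'')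
  also have "\<dots> = (\<integral>\<^sup>+ q. ennreal (d (fst q) (snd q)) * indicator P q \<partial>measure_pmf c)"
    using finP by (intro nn_integral_indicator_finite[symmetric]) auto
  also have "\<dots> \<le> (\<integral>\<^sup>+ q. ennreal (d (fst q) (snd q)) \<partial>measure_pmf c)"
    by (intro nn_integral_mono) (auto split: split_indicator)
  also have "\<dots> < ennreal (\<epsilon> + \<delta>)" by (rule cost)
  finally have Sless: "S < \<epsilon> + \<delta>" using S0 by (simp add: ennreal_less_iff)
  define lam where "lam = \<epsilon> / (\<epsilon> + \<delta>)"
  have lam0: "0 \<le> lam" and lam1: "lam \<le> 1" unfolding lam_def using eps del by auto
  have oneminus: "1 - lam = \<delta> / (\<epsilon> + \<delta>)" unfolding lam_def using eps del by (simp add: field_simps)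
  define T' where "T' j = (if xh j = x then T j else lam * T j)" for j
  have "(\<Sum>j=1..N. d x (xh j) * T' j) = lam * S"
    unfolding S_def sum_distrib_left
  proof (rule sum.cong[OF refl])
    fix j assume j: "j \<in> {1..N}"
    have "d x x = 0" using dpos(2)[OF x x] by simp
    thus "d x (xh j) * T' j = lam * (d x (xh j) * T j)" unfolding T'_def by auto
  qed
  also have "\<dots> \<le> lam * (\<epsilon> + \<delta>)" using Sless lam0 by (intro mult_left_mono) auto
  also have "\<dots> = \<epsilon>" unfolding lam_def using eps del by simp
  finally have "(\<Sum>j=1..N. d x (xh j) * T' j) \<le> \<epsilon>" .
  moreover have "0 \<le> T' j \<and> T' j \<le> w j" if "j \<in> {1..N}" for j
  proof -
    have "lam * T j \<le> T j" using mult_right_mono[OF lam1 T0[of j]] by simp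
    thus ?thesis unfolding T'_def using T0[of j] Tw[OF that] lam0 by auto
  qed
  ultimately have "T' \<in> lp_feasible d N xh w \<epsilon> x" unfolding lp_feasible_def by blast
  hence T'V: "(\<Sum>j=1..N. T' j) \<le> V" using opt by blast
  have diff: "T j - T' j \<le> \<delta> * (if xh j = x then 0 else 1 / d x (xh j))" if j: "j \<in> {1..N}" for j
  proof (cases "xh j = x")
    case True thus ?thesis unfolding T'_def by simp
  next
    case False
    have dj: "d x (xh j) > 0" using dpos[OF x xk[OF j]] False by force
    have "d x (xh j) * T j \<le> S" unfolding S_def
      using terms0 j by (intro member_le_sum) auto
    hence "T j * d x (xh j) \<le> \<epsilon> + \<delta>" using Sless by (simp add: mult.commute)
    hence Tj: "T j \<le> (\<epsilon> + \<delta>) / d x (xh j)" using dj by (simp add: pos_le_divide_eq)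
    have "T j - T' j = (1 - lam) * T j" unfolding T'_def using False by (simp add: algebra_simps)
    also have "\<dots> = \<delta> / (\<epsilon> + \<delta>) * T j" by (simp add: oneminus)
    also have "\<dots> \<le> \<delta> / (\<epsilon> + \<delta>) * ((\<epsilon> + \<delta>) / d x (xh j))"
      using Tj eps del by (intro mult_left_mono) auto
    also have "\<dots> = \<delta> * (1 / d x (xh j))" using eps del by simp
    finally show ?thesis using False by simp
  qed
  have "(\<Sum>j=1..N. T j) - (\<Sum>j=1..N. T' j) \<le> \<delta> * (\<Sum>j=1..N. if xh j = x then 0 else 1 / d x (xh j))"
    unfolding sum_subtractf[symmetric] sum_distrib_left by (intro sum_mono diff) 
  thus ?thesis using nuT T'V by linarith
qed
lemma lp_max:
  fixes d :: "'a \<Rightarrow> 'a \<Rightarrow> real" and N :: nat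
  assumes "\<forall>j\<in>{1..N}. w j \<ge> 0" "\<epsilon> \<ge> 0"
  shows "\<exists>T\<in>lp_feasible d N xh w \<epsilon> x. \<forall>T'\<in>lp_feasible d N xh w \<epsilon> x. (\<Sum>j=1..N. T' j) \<le> (\<Sum>j=1..N. T j)"
proof -
  define K :: "(nat \<Rightarrow> real) set" where "K = PiE UNIV (\<lambda>j. if j\<in>{1..N} then {0..w j} else {0})"
  have "compactin (product_topology (\<lambda>_. euclidean) UNIV) K"
    unfolding K_def compactin_PiE by auto
  hence cK: "compact K" by (simp add: euclidean_product_topology)
  have c: "\<And>j. continuous_on UNIV (\<lambda>T::nat\<Rightarrow>real. T j)" by simp
  define F where "F = K \<inter> {T. (\<Sum>j=1..N. d x (xh j) * T j) \<le> \<epsilon>}"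
  have "closed {T::nat\<Rightarrow>real. (\<Sum>j=1..N. d x (xh j) * T j) \<le> \<epsilon>}"
    by (intro closed_Collect_le continuous_on_sum continuous_on_mult continuous_on_const c)
  hence cF: "compact F" unfolding F_def using cK by (simp add: compact_Int_closed)
  have "(\<lambda>_. 0) \<in> K" unfolding K_def using assms by (intro PiE_I) auto
  hence "(\<lambda>_. 0) \<in> F" using assms unfolding F_def by auto
  hence "F \<noteq> {}" by auto
  moreover have "continuous_on F (\<lambda>T. \<Sum>j=1..N. T j)"
    by (rule continuous_on_subset[OF _ subset_UNIV], intro continuous_on_sum c)
  ultimately obtain T where T: "T \<in> F" "\<And>T'. T' \<in> F \<Longrightarrow> (\<Sum>j=1..N. T' j) \<le> (\<Sum>j=1..N. T j)"
    using continuous_attains_sup[OF cF] by blast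
  have TK: "T \<in> K" and Tc: "(\<Sum>j=1..N. d x (xh j) * T j) \<le> \<epsilon>" using T(1) unfolding F_def by auto
  have "\<forall>j\<in>{1..N}. 0 \<le> T j \<and> T j \<le> w j"
  proof
    fix j assume j: "j\<in>{1..N}"
    have "T j \<in> (if j\<in>{1..N} then {0..w j} else {0})" using TK unfolding K_def by (rule PiE_mem) simp
    thus "0 \<le> T j \<and> T j \<le> w j" using j by simp
  qed
  hence TF: "T \<in> lp_feasible d N xh w \<epsilon> x" using Tc unfolding lp_feasible_def by blast
  show ?thesis
  proof (intro bexI[OF _ TF] ballI)
    fix T' assume T': "T' \<in> lp_feasible d N xh w \<epsilon> x"
    define T'' where "T'' = (\<lambda>j. if j\<in>{1..N} then T' j else 0)"
    have s: "(\<Sum>j=1..N. f j * T'' j) = (\<Sum>j=1..N. f j * T' j)" for f :: "nat \<Rightarrow> real"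
      unfolding T''_def by (intro sum.cong) auto
    have "T'' \<in> K" unfolding K_def T''_def using T' unfolding lp_feasible_def by (intro PiE_I) auto
    moreover have "(\<Sum>j=1..N. d x (xh j) * T'' j) \<le> \<epsilon>" using T' s[of "\<lambda>j. d x (xh j)"] unfolding lp_feasible_def by simp
    ultimately have "T'' \<in> F" unfolding F_def by blast
    from T(2)[OF this] s[of "\<lambda>_. 1"] show "(\<Sum>j=1..N. T' j) \<le> (\<Sum>j=1..N. T j)" by simp
  qed
qed

theorem mainTheorem5:
  fixes X :: "'a::euclidean_space set" and d :: "'a \<Rightarrow> 'a \<Rightarrow> real"
    and N :: nat and xh :: "nat \<Rightarrow> 'a" and w :: "nat \<Rightarrow> real"
    and \<nu>h :: "'a pmf" and \<epsilon> :: real and x :: 'a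
  assumes "countable X"
    and "metric_on X d"
    and "inj_on xh {1..N}"
    and "xh ` {1..N} \<subseteq> X"
    and "\<forall>j\<in>{1..N}. w j > 0"
    and "(\<Sum>j=1..N. w j) = 1"
    and "\<forall>y. pmf \<nu>h y = (\<Sum>j=1..N. if xh j = y then w j else 0)"
    and "\<epsilon> \<ge> 0"
    and "x \<in> X"
  shows "\<exists>T\<in>lp_feasible d N xh w \<epsilon> x.
           (\<Sum>j=1..N. T j) = (SUP \<nu>\<in>wball X d \<nu>h \<epsilon>. pmf \<nu> x) \<and>
           (\<forall>T'\<in>lp_feasible d N xh w \<epsilon> x. (\<Sum>j=1..N. T' j) \<le> (\<Sum>j=1..N. T j))"
proof -
  note met = assms(2) and inj = assms(3) and sub = assms(4) and w = assms(5) and p = assms(7)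
    and eps = assms(8) and x = assms(9)
  have w0: "\<forall>j\<in>{1..N}. w j \<ge> 0" using w by (simp add: less_imp_le)
  obtain T where TF: "T \<in> lp_feasible d N xh w \<epsilon> x"
    and opt: "\<forall>T'\<in>lp_feasible d N xh w \<epsilon> x. (\<Sum>j=1..N. T' j) \<le> (\<Sum>j=1..N. T j)"
    using lp_max[where d=d and xh=xh and x=x, OF w0 eps] by (rule bexE)
  define V where "V = (\<Sum>j=1..N. T j)"
  define K where "K = (\<Sum>j=1..N. if xh j = x then 0 else 1 / d x (xh j))"
  have K0: "0 \<le> K" unfolding K_def
  proof (rule sum_nonneg)
    fix j assume j: "j \<in> {1..N}"
    have "xh j \<in> X" using sub j by auto
    hence "0 \<le> d x (xh j)" using met x unfolding metric_on_def by blast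
    thus "0 \<le> (if xh j = x then 0 else 1 / d x (xh j))" by simp
  qed
  have upper: "pmf \<nu> x \<le> V" if nu: "\<nu> \<in> wball X d \<nu>h \<epsilon>" for \<nu>
  proof (rule field_le_epsilon)
    fix e :: real assume e: "0 < e"
    define \<delta> where "\<delta> = e / (K + 1)"
    have \<delta>: "\<delta> > 0" unfolding \<delta>_def using e K0 by simp
    have "pmf \<nu> x \<le> V + \<delta> * K" unfolding K_def V_def
      by (rule upper_delta[OF met inj sub w p x eps nu opt \<delta>])
    also have "\<delta> * K \<le> e"
    proof -
      have "\<delta> * K = e * (K / (K + 1))" unfolding \<delta>_def by simp
      also have "\<dots> \<le> e * 1" using K0 e by (intro mult_left_mono) auto
      finally show ?thesis by simp
    qed
    finally show "pmf \<nu> x \<le> V + e" by simp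
  qed
  obtain \<nu>0 where nu0: "\<nu>0 \<in> wball X d \<nu>h \<epsilon>" and ge: "V \<le> pmf \<nu>0 x"
    using achieve[OF met inj sub w p x TF] unfolding V_def by blast
  have "pmf \<nu>0 x = V" using upper[OF nu0] ge by simp
  have "(SUP \<nu>\<in>wball X d \<nu>h \<epsilon>. pmf \<nu> x) = V"
  proof (rule cSup_eq_maximum)
    show "V \<in> (\<lambda>\<nu>. pmf \<nu> x) ` wball X d \<nu>h \<epsilon>" using nu0 \<open>pmf \<nu>0 x = V\<close> by (metis image_eqI)
  next
    fix y assume "y \<in> (\<lambda>\<nu>. pmf \<nu> x) ` wball X d \<nu>h \<epsilon>"
    then obtain \<nu> where "\<nu> \<in> wball X d \<nu>h \<epsilon>" "y = pmf \<nu> x" by blast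
    thus "y \<le> V" using upper by simp
  qed
  hence "(\<Sum>j=1..N. T j) = (SUP \<nu>\<in>wball X d \<nu>h \<epsilon>. pmf \<nu> x)" unfolding V_def by simp
  thus ?thesis using TF opt by blast
qed

end
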